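(* There is an absolute constant $C>0$ such that for every finite graph $G=(V,E)$ with maximum degree $\Delta$ and every $r\in\mathbb{N}$, $r\ge1$, every output $D$ of the algorithm Ratio on $(G,r)$ (for any tie-breaking) is an $r$-dominating set satisfying $$\overline{\mathrm{cong}}_r(D)\le C\cdot\max\bigl(1,\sqrt{\Delta^r}\bigr)\cdot \mathrm{mac}^r(G).$$ That is, Ratio is an $\mathcal{O}(\sqrt{\Delta^r})$-approximation algorithm for Minimum Congestion $r$-Dominating Set.
   Context: $N^r[v]$ is the set of vertices at distance at most $r$ from $v$, and $N^r[D]=\bigcup_{x\in D}N^r[x]$. $D$ is $r$-dominating if $N^r[D]=V$. The average $r$-congestion of $S$ is $\overline{\mathrm{cong}}_r(S)=\frac{1}{|V|}\sum_{v\in V}|N^r[v]\cap S|$, and $\mathrm{mac}^r(G)$ is its minimum over $r$-dominating sets. The algorithm Ratio starts with $D=\emptyset$ and, while $N^r[D]\ne V$, adds to $D$ a vertex $v$ maximizing $\frac{|N^r[v]\setminus N^r[D]|}{|N^r[v]|}$, breaking ties arbitrarily; it outputs $D$. *)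

theory Defs
  imports Complex_Main
begin

definition simple_graph :: "'a set \<Rightarrow> ('a \<Rightarrow> 'a \<Rightarrow> bool) \<Rightarrow> bool" where
  "simple_graph V E \<longleftrightarrow> finite V \<and> (\<forall>u v. E u v \<longrightarrow> u \<in> V \<and> v \<in> V)
     \<and> (\<forall>u v. E u v \<longrightarrow> E v u) \<and> (\<forall>v. \<not> E v v)"

definition degree :: "'a set \<Rightarrow> ('a \<Rightarrow> 'a \<Rightarrow> bool) \<Rightarrow> 'a \<Rightarrow> nat" where
  "degree V E v = card {u \<in> V. E v u}"

definition max_degree :: "'a set \<Rightarrow> ('a \<Rightarrow> 'a \<Rightarrow> bool) \<Rightarrow> nat" where
  "max_degree V E = Max (insert 0 (degree V E ` V))"

definition nbhd :: "'a set \<Rightarrow> ('a \<Rightarrow> 'a \<Rightarrow> bool) \<Rightarrow> nat \<Rightarrow> 'a \<Rightarrow> 'a set" where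
  "nbhd V E r v = {u \<in> V. \<exists>k\<le>r. (E ^^ k) v u}"

definition nbhd_set :: "'a set \<Rightarrow> ('a \<Rightarrow> 'a \<Rightarrow> bool) \<Rightarrow> nat \<Rightarrow> 'a set \<Rightarrow> 'a set" where
  "nbhd_set V E r D = (\<Union>x\<in>D. nbhd V E r x)"

definition r_dominating :: "'a set \<Rightarrow> ('a \<Rightarrow> 'a \<Rightarrow> bool) \<Rightarrow> nat \<Rightarrow> 'a set \<Rightarrow> bool" where
  "r_dominating V E r D \<longleftrightarrow> D \<subseteq> V \<and> nbhd_set V E r D = V"

definition avg_cong :: "'a set \<Rightarrow> ('a \<Rightarrow> 'a \<Rightarrow> bool) \<Rightarrow> nat \<Rightarrow> 'a set \<Rightarrow> real" where
  "avg_cong V E r S = (\<Sum>v\<in>V. real (card (nbhd V E r v \<inter> S))) / real (card V)"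

definition mac :: "'a set \<Rightarrow> ('a \<Rightarrow> 'a \<Rightarrow> bool) \<Rightarrow> nat \<Rightarrow> real" where
  "mac V E r = Min {avg_cong V E r S | S. r_dominating V E r S}"

definition ratio_val :: "'a set \<Rightarrow> ('a \<Rightarrow> 'a \<Rightarrow> bool) \<Rightarrow> nat \<Rightarrow> 'a set \<Rightarrow> 'a \<Rightarrow> real" where
  "ratio_val V E r D v =
     real (card (nbhd V E r v - nbhd_set V E r D)) / real (card (nbhd V E r v))"

definition ratio_step :: "'a set \<Rightarrow> ('a \<Rightarrow> 'a \<Rightarrow> bool) \<Rightarrow> nat \<Rightarrow> 'a set \<Rightarrow> 'a set \<Rightarrow> bool" where
  "ratio_step V E r D D' \<longleftrightarrow> nbhd_set V E r D \<noteq> V \<and>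
     (\<exists>v\<in>V. (\<forall>w\<in>V. ratio_val V E r D w \<le> ratio_val V E r D v) \<and> D' = insert v D)"

definition ratio_output :: "'a set \<Rightarrow> ('a \<Rightarrow> 'a \<Rightarrow> bool) \<Rightarrow> nat \<Rightarrow> 'a set \<Rightarrow> bool" where
  "ratio_output V E r D \<longleftrightarrow> (ratio_step V E r)\<^sup>*\<^sup>* {} D \<and> nbhd_set V E r D = V"

end

theory Submission
  imports Defs
begin



lemma relpow_sym:
  assumes "\<And>a b. E a b \<Longrightarrow> E b a"
  shows "(E ^^ k) v u \<Longrightarrow> (E ^^ k) u v"
proof (induction k arbitrary: u)
  case 0 then show ?case by auto
next
  case (Suc k)
  from Suc.prems obtain y where "(E ^^ k) v y" "E y u" by (rule relpowp_Suc_E)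
  then have "(E ^^ k) y v" "E u y" using Suc.IH assms by auto
  then show ?case by (rule relpowp_Suc_I2[rotated])
qed

lemma nbhd_sub: "nbhd V E r v \<subseteq> V" unfolding nbhd_def by auto

lemma nbhd_self: "v \<in> V \<Longrightarrow> v \<in> nbhd V E r v"
  unfolding nbhd_def by (auto intro: exI[of _ 0])

lemma nbhd_sym:
  assumes "simple_graph V E" "u \<in> nbhd V E r v" "v \<in> V"
  shows "v \<in> nbhd V E r u"
proof -
  have sym: "\<And>a b. E a b \<Longrightarrow> E b a" using assms(1) unfolding simple_graph_def by blast
  from assms(2) obtain k where "k \<le> r" "(E ^^ k) v u" unfolding nbhd_def by auto
  moreover have "(E ^^ k) u v" using relpow_sym[of E, OF sym] \<open>(E ^^ k) v u\<close> by blast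
  ultimately show ?thesis using assms(3) unfolding nbhd_def by blast
qed

lemma fin_nbhd: "simple_graph V E \<Longrightarrow> finite (nbhd V E r v)"
  using nbhd_sub unfolding simple_graph_def by (meson finite_subset)

lemma card_nbhd_pos: "simple_graph V E \<Longrightarrow> v \<in> V \<Longrightarrow> card (nbhd V E r v) > 0"
  using fin_nbhd nbhd_self by (metis card_gt_0_iff empty_iff)

lemma degree_le: "simple_graph V E \<Longrightarrow> w \<in> V \<Longrightarrow> degree V E w \<le> max_degree V E"
  unfolding max_degree_def simple_graph_def by (intro Max_ge) auto

lemma layer_card:
  assumes G: "simple_graph V E" and v: "v \<in> V"
  shows "{u. (E ^^ k) v u} \<subseteq> V \<and> card {u. (E ^^ k) v u} \<le> max_degree V E ^ k"
proof (induction k)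
  case 0
  then show ?case using v by auto
next
  case (Suc k)
  let ?L = "{u. (E ^^ k) v u}"
  have fin: "finite ?L" using Suc.IH G unfolding simple_graph_def by (meson finite_subset)
  have sub: "{u. (E ^^ Suc k) v u} \<subseteq> (\<Union>w\<in>?L. {u \<in> V. E w u})"
    using G unfolding simple_graph_def by (auto elim: relpowp_Suc_E)
  have "card {u. (E ^^ Suc k) v u} \<le> card (\<Union>w\<in>?L. {u \<in> V. E w u})"
    apply (rule card_mono[OF _ sub]) using fin G unfolding simple_graph_def by auto
  also have "\<dots> \<le> (\<Sum>w\<in>?L. card {u \<in> V. E w u})" by (rule card_UN_le[OF fin])
  also have "\<dots> \<le> (\<Sum>w\<in>?L. max_degree V E)"
    apply (rule sum_mono) using degree_le[OF G] Suc.IH unfolding degree_def by auto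
  also have "\<dots> \<le> max_degree V E ^ Suc k" using Suc.IH by (simp add: mult.commute)
  finally show ?case using sub by auto
qed

lemma small_deg_walk:
  assumes G: "simple_graph V E" and d: "max_degree V E \<le> 1" and v: "v \<in> V"
  shows "(E ^^ k) v u \<Longrightarrow> u = v \<or> E v u"
proof (induction k arbitrary: u)
  case 0 then show ?case by auto
next
  case (Suc k)
  from Suc.prems obtain y where y: "(E ^^ k) v y" "E y u" by (rule relpowp_Suc_E)
  show ?case
  proof (cases "y = v")
    case True then show ?thesis using y by auto
  next
    case False
    then have "E v y" using Suc.IH y by auto
    then have "E y v" "y \<in> V" "u \<in> V" "v \<in> V" using G y unfolding simple_graph_def by auto
    have "card {w \<in> V. E y w} \<le> 1" using degree_le[OF G \<open>y \<in> V\<close>] d unfolding degree_def by auto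
    moreover have "finite {w \<in> V. E y w}" using G unfolding simple_graph_def by auto
    ultimately have "\<forall>a\<in>{w \<in> V. E y w}. \<forall>b\<in>{w \<in> V. E y w}. a = b"
      using card_le_Suc0_iff_eq by (metis One_nat_def)
    then have "u = v" using \<open>E y v\<close> \<open>u \<in> V\<close> \<open>v \<in> V\<close> y(2) by blast
    then show ?thesis by auto
  qed
qed

lemma geo_le: "(d::nat) \<ge> 2 \<Longrightarrow> (\<Sum>k\<le>r. d ^ k) \<le> 2 * d ^ r"
proof (induction r)
  case 0 then show ?case by auto
next
  case (Suc r)
  have h: "2 * d ^ r \<le> d * d ^ r" using Suc.prems by simp
  have e: "(\<Sum>k\<le>Suc r. d ^ k) = (\<Sum>k\<le>r. d ^ k) + d * d ^ r" by simp
  have "(\<Sum>k\<le>r. d ^ k) \<le> 2 * d ^ r" using Suc by simp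
  moreover have "d ^ Suc r = d * d ^ r" by simp
  ultimately show ?case unfolding e using h by linarith
qed

lemma nbhd_card_bound:
  assumes G: "simple_graph V E" and v: "v \<in> V"
  shows "card (nbhd V E r v) \<le> 2 * max 1 (max_degree V E ^ r)"
proof (cases "max_degree V E \<le> 1")
  case True
  have "nbhd V E r v \<subseteq> insert v {u \<in> V. E v u}"
    using small_deg_walk[OF G True v] unfolding nbhd_def by auto
  moreover have "finite {u \<in> V. E v u}" using G unfolding simple_graph_def by auto
  ultimately have "card (nbhd V E r v) \<le> card (insert v {u \<in> V. E v u})"
    by (intro card_mono) auto
  also have "\<dots> \<le> Suc (card {u \<in> V. E v u})"
    using \<open>finite {u \<in> V. E v u}\<close> by (simp add: card_insert_if)
  also have "\<dots> \<le> 2" using degree_le[OF G v] True unfolding degree_def by auto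
  finally show ?thesis by auto
next
  case False
  have "nbhd V E r v \<subseteq> (\<Union>k\<in>{..r}. {u. (E ^^ k) v u})" unfolding nbhd_def by auto
  then have "card (nbhd V E r v) \<le> card (\<Union>k\<in>{..r}. {u. (E ^^ k) v u})"
    apply (rule card_mono[rotated]) using layer_card[OF G v] G unfolding simple_graph_def
    by (meson finite_UN_I finite_atMost finite_subset)
  also have "\<dots> \<le> (\<Sum>k\<le>r. card {u. (E ^^ k) v u})" by (rule card_UN_le) auto
  also have "\<dots> \<le> (\<Sum>k\<le>r. max_degree V E ^ k)" by (rule sum_mono) (use layer_card[OF G v] in auto)
  also have "\<dots> \<le> 2 * max_degree V E ^ r" using geo_le False by auto
  finally show ?thesis by auto
qed




lemma cost_eq:
  assumes G: "simple_graph V E" and S: "S \<subseteq> V"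
  shows "(\<Sum>v\<in>V. card (nbhd V E r v \<inter> S)) = (\<Sum>x\<in>S. card (nbhd V E r x))"
proof -
  have fV: "finite V" using G unfolding simple_graph_def by auto
  have fS: "finite S" using S fV finite_subset by auto
  have "(\<Sum>v\<in>V. card (nbhd V E r v \<inter> S)) = (\<Sum>v\<in>V. \<Sum>x\<in>S. if v \<in> nbhd V E r x then 1 else 0)"
  proof (rule sum.cong[OF refl])
    fix v assume v: "v \<in> V"
    have "nbhd V E r v \<inter> S = {x \<in> S. v \<in> nbhd V E r x}"
      using nbhd_sym[OF G] v S by blast
    then show "card (nbhd V E r v \<inter> S) = (\<Sum>x\<in>S. if v \<in> nbhd V E r x then 1 else 0)"
      using sum.inter_filter[OF fS, of "\<lambda>_. (1::nat)"] by simp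
  qed
  also have "\<dots> = (\<Sum>x\<in>S. \<Sum>v\<in>V. if v \<in> nbhd V E r x then 1 else 0)" by (rule sum.swap)
  also have "\<dots> = (\<Sum>x\<in>S. card (nbhd V E r x))"
  proof (rule sum.cong[OF refl])
    fix x assume "x \<in> S"
    have "{v \<in> V. v \<in> nbhd V E r x} = nbhd V E r x" using nbhd_sub[of V E r x] by blast
    moreover have "card {v \<in> V. v \<in> nbhd V E r x} = (\<Sum>v\<in>V. if v \<in> nbhd V E r x then 1 else 0)"
      using sum.inter_filter[OF fV, of "\<lambda>_. (1::nat)" "\<lambda>v. v \<in> nbhd V E r x"] by simp
    ultimately show "(\<Sum>v\<in>V. if v \<in> nbhd V E r x then 1 else 0) = card (nbhd V E r x)"
      by simp
  qed
  finally show ?thesis .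
qed

lemma key_real:
  fixes u c :: real
  assumes "1 \<le> c" "c \<le> u"
  shows "c / u \<le> 2 * (sqrt u - sqrt (u - c))"
proof -
  have u0: "0 \<le> u" "0 \<le> u - c" using assms by auto
  define a where "a = sqrt u"
  define b where "b = sqrt (u - c)"
  have a2: "a * a = u" using u0 unfolding a_def by simp
  have b2: "b * b = u - c" using u0 unfolding b_def by simp
  have b0: "0 \<le> b" using u0 unfolding b_def by simp
  have ba: "b \<le> a" unfolding a_def b_def using assms by (intro real_sqrt_le_mono) simp
  have a1: "1 \<le> a" unfolding a_def using assms by simp
  have c: "c = (a - b) * (a + b)" using a2 b2 by (simp add: algebra_simps)
  have "1 * a \<le> a * a" using a1 by (intro mult_right_mono) auto
  then have "a + b \<le> 2 * a * a" using ba a1 by linarith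
  then have "(a - b) * (a + b) \<le> (a - b) * (2 * a * a)" using ba by (intro mult_left_mono) auto
  moreover have "(a - b) * (2 * a * a) = 2 * (a - b) * (a * a)" by algebra
  ultimately have "c \<le> 2 * (a - b) * u" using c a2 by simp
  moreover have "u > 0" using assms by simp
  ultimately show ?thesis unfolding a_def b_def by (simp add: divide_simps mult.commute)
qed

definition fsel :: "'a set \<Rightarrow> ('a \<Rightarrow> 'a \<Rightarrow> bool) \<Rightarrow> nat \<Rightarrow> 'a set \<Rightarrow> 'a \<Rightarrow> 'a" where
  "fsel V E r S e = (SOME x. x \<in> S \<and> e \<in> nbhd V E r x)"
definition Aset where "Aset V E r S x = {e \<in> V. fsel V E r S e = x}"
definition unc where "unc V E r D = V - nbhd_set V E r D"
definition pot where "pot V E r S D = (\<Sum>x\<in>S. 2 * real (card (nbhd V E r x)) *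
   sqrt (real (card (Aset V E r S x \<inter> unc V E r D))))"
definition cost where "cost V E r D = (\<Sum>x\<in>D. real (card (nbhd V E r x)))"

lemma fsel_prop:
  assumes "r_dominating V E r S" "e \<in> V"
  shows "fsel V E r S e \<in> S \<and> e \<in> nbhd V E r (fsel V E r S e)"
proof -
  have "\<exists>x. x \<in> S \<and> e \<in> nbhd V E r x" using assms unfolding r_dominating_def nbhd_set_def by auto
  then show ?thesis unfolding fsel_def by (rule someI_ex)
qed

lemma Aset_sub: "r_dominating V E r S \<Longrightarrow> Aset V E r S x \<subseteq> nbhd V E r x"
  using fsel_prop unfolding Aset_def by fastforce

lemma nbhd_set_sub: "nbhd_set V E r D \<subseteq> V" by (auto simp: nbhd_set_def nbhd_def)




lemma inv:
  assumes G: "simple_graph V E" and S: "r_dominating V E r S"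
    and R: "(ratio_step V E r)\<^sup>*\<^sup>* {} D"
  shows "D \<subseteq> V \<and> finite D \<and> cost V E r D + pot V E r S D \<le> pot V E r S {}"
  using R
proof (induction rule: rtranclp_induct)
  case base
  then show ?case unfolding cost_def by simp
next
  case (step D D')
  let ?N = "nbhd V E r"
  let ?T = "nbhd_set V E r D"
  let ?A = "Aset V E r S"
  have fV: "finite V" using G unfolding simple_graph_def by auto
  have SV: "S \<subseteq> V" using S unfolding r_dominating_def by auto
  have fS: "finite S" using SV fV finite_subset by auto
  from step.hyps(2) obtain v where v: "v \<in> V" and mx: "\<forall>w\<in>V. ratio_val V E r D w \<le> ratio_val V E r D v"
    and D': "D' = insert v D" and nd: "?T \<noteq> V"
    unfolding ratio_step_def by blast
  have TV: "?T \<subseteq> V" by (rule nbhd_set_sub)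
  obtain e where e: "e \<in> V" "e \<notin> ?T" using TV nd by blast
  have "card (?N e - ?T) > 0"
    using e nbhd_self[OF e(1)] fin_nbhd[OF G] by (metis Diff_iff card_gt_0_iff empty_iff finite_Diff)
  then have "ratio_val V E r D e > 0" unfolding ratio_val_def using card_nbhd_pos[OF G e(1)] by simp
  then have rho: "ratio_val V E r D v > 0" using mx e(1) by fastforce
  define New where "New = ?N v - ?T"
  have fNew: "finite New" unfolding New_def using fin_nbhd[OF G] by auto
  have sv: "card (?N v) > 0" using card_nbhd_pos[OF G v] .
  have rho_eq: "ratio_val V E r D v = real (card New) / real (card (?N v))"
    unfolding ratio_val_def New_def ..
  have cNew: "card New > 0"
  proof (rule ccontr)
    assume "\<not> card New > 0"
    then have "card New = 0" by simp
    then show False using rho rho_eq by simp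
  qed
  have vD: "v \<notin> D"
  proof
    assume "v \<in> D"
    then have "?N v \<subseteq> ?T" unfolding nbhd_set_def by auto
    then have "New = {}" unfolding New_def by auto
    then show False using cNew by simp
  qed
  have costD': "cost V E r D' = cost V E r D + real (card (?N v))"
    unfolding cost_def D' using vD step.IH by simp
  have uncD': "unc V E r D' = unc V E r D - ?N v"
    unfolding unc_def D' nbhd_set_def by auto
  have New_unc: "New \<subseteq> unc V E r D" unfolding New_def unc_def using nbhd_sub[of V E r v] by auto
  define c where "c x = card (?A x \<inter> New)" for x
  define u where "u x = card (?A x \<inter> unc V E r D)" for x
  have fA: "finite (?A x)" for x unfolding Aset_def using fV by auto
  have u': "card (?A x \<inter> unc V E r D') = u x - c x" and cu: "c x \<le> u x" for x
  proof -
    have eq: "?A x \<inter> unc V E r D' = (?A x \<inter> unc V E r D) - (?A x \<inter> New)"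
      unfolding uncD' by (auto simp: New_def unc_def)
    have sub: "?A x \<inter> New \<subseteq> ?A x \<inter> unc V E r D" using New_unc by auto
    show "card (?A x \<inter> unc V E r D') = u x - c x" unfolding eq u_def c_def
      using fA sub by (simp add: card_Diff_subset finite_subset)
    show "c x \<le> u x" unfolding u_def c_def using sub fA by (simp add: card_mono)
  qed
  have cardNew: "card New = (\<Sum>x\<in>S. c x)"
  proof -
    have img: "fsel V E r S ` New \<subseteq> S"
      using fsel_prop[OF S] New_unc unfolding unc_def by auto
    have "(\<Sum>x\<in>S. \<Sum>e\<in>{e \<in> New. fsel V E r S e = x}. (1::nat)) = (\<Sum>e\<in>New. 1)"
      by (rule sum.group[OF fNew fS img])
    moreover have "{e \<in> New. fsel V E r S e = x} = ?A x \<inter> New" for x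
      unfolding Aset_def using New_unc unfolding unc_def by auto
    ultimately show ?thesis unfolding c_def by simp
  qed
  have per: "real (c x) / ratio_val V E r D v \<le>
     2 * real (card (?N x)) * (sqrt (real (u x)) - sqrt (real (u x - c x)))" if x: "x \<in> S" for x
  proof (cases "c x = 0")
    case True then show ?thesis by simp
  next
    case False
    have xV: "x \<in> V" using x SV by auto
    have sx: "card (?N x) > 0" using card_nbhd_pos[OF G xV] .
    have "?A x \<inter> unc V E r D \<subseteq> ?N x - ?T" using Aset_sub[OF S] unfolding unc_def by auto
    then have "u x \<le> card (?N x - ?T)" unfolding u_def using fin_nbhd[OF G] by (simp add: card_mono)
    then have "real (u x) / real (card (?N x)) \<le> ratio_val V E r D x"
      unfolding ratio_val_def by (simp add: divide_right_mono)
    also have "\<dots> \<le> ratio_val V E r D v" using mx xV by auto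
    finally have rl: "real (u x) / real (card (?N x)) \<le> ratio_val V E r D v" .
    have u1: "u x \<ge> 1" using False cu[of x] by linarith
    have upos: "real (u x) / real (card (?N x)) > 0" using u1 sx by simp
    have "real (c x) / ratio_val V E r D v \<le> real (c x) / (real (u x) / real (card (?N x)))"
      using rl upos rho u1 sx by (intro divide_left_mono) (auto simp: zero_less_mult_iff zero_less_divide_iff)
    also have "\<dots> = real (card (?N x)) * (real (c x) / real (u x))" by simp
    also have "\<dots> \<le> real (card (?N x)) * (2 * (sqrt (real (u x)) - sqrt (real (u x) - real (c x))))"
      using key_real[of "real (c x)" "real (u x)"] False cu by (intro mult_left_mono) auto
    finally show ?thesis using cu[of x] by (simp add: of_nat_diff algebra_simps)
  qed
  have "real (card (?N v)) = real (card New) / ratio_val V E r D v"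
    using rho_eq sv cNew by simp
  also have "\<dots> = (\<Sum>x\<in>S. real (c x) / ratio_val V E r D v)"
    unfolding cardNew by (simp add: sum_divide_distrib)
  also have "\<dots> \<le> (\<Sum>x\<in>S. 2 * real (card (?N x)) * (sqrt (real (u x)) - sqrt (real (u x - c x))))"
    by (rule sum_mono) (rule per)
  also have "\<dots> = (\<Sum>x\<in>S. 2 * real (card (?N x)) * sqrt (real (u x))) -
      (\<Sum>x\<in>S. 2 * real (card (?N x)) * sqrt (real (u x - c x)))"
    by (simp only: right_diff_distrib sum_subtractf)
  also have "\<dots> = pot V E r S D - pot V E r S D'"
    unfolding pot_def u' u_def ..
  finally have "real (card (?N v)) \<le> pot V E r S D - pot V E r S D'" .
  then have "cost V E r D' + pot V E r S D' \<le> pot V E r S {}"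
    using step.IH costD' by linarith
  moreover have "D' \<subseteq> V" "finite D'" using step.IH v D' by auto
  ultimately show ?case by blast
qed




lemma avg_cost:
  assumes G: "simple_graph V E" and S: "S \<subseteq> V"
  shows "avg_cong V E r S = cost V E r S / real (card V)"
proof -
  have "(\<Sum>v\<in>V. real (card (nbhd V E r v \<inter> S))) = real (\<Sum>v\<in>V. card (nbhd V E r v \<inter> S))"
    by simp
  also have "\<dots> = cost V E r S" unfolding cost_eq[OF G S] cost_def by simp
  finally show ?thesis unfolding avg_cong_def by simp
qed

lemma pot_empty_bound:
  assumes G: "simple_graph V E" and S: "r_dominating V E r S"
    and K: "\<forall>x\<in>V. card (nbhd V E r x) \<le> K"
  shows "pot V E r S {} \<le> 2 * sqrt (real K) * cost V E r S"
proof -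
  have SV: "S \<subseteq> V" using S unfolding r_dominating_def by auto
  have "pot V E r S {} \<le> (\<Sum>x\<in>S. 2 * real (card (nbhd V E r x)) * sqrt (real K))"
    unfolding pot_def
  proof (rule sum_mono)
    fix x assume x: "x \<in> S"
    have "card (Aset V E r S x \<inter> unc V E r {}) \<le> card (nbhd V E r x)"
      using Aset_sub[OF S, of x] fin_nbhd[OF G] by (intro card_mono) auto
    also have "\<dots> \<le> K" using K x SV by auto
    finally have "sqrt (real (card (Aset V E r S x \<inter> unc V E r {}))) \<le> sqrt (real K)" by simp
    then show "2 * real (card (nbhd V E r x)) * sqrt (real (card (Aset V E r S x \<inter> unc V E r {})))
       \<le> 2 * real (card (nbhd V E r x)) * sqrt (real K)" by (intro mult_left_mono) auto
  qed
  also have "\<dots> = 2 * sqrt (real K) * cost V E r S"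
    unfolding cost_def by (simp add: sum_distrib_left sum_distrib_right algebra_simps)
  finally show ?thesis .
qed

lemma pot_nonneg: "pot V E r S D \<ge> 0" unfolding pot_def by (intro sum_nonneg) auto

lemma avg_nonneg: "avg_cong V E r S \<ge> 0" unfolding avg_cong_def by (intro divide_nonneg_nonneg sum_nonneg) auto

lemma sqrt_max1: "sqrt (max 1 y) \<le> max 1 (sqrt y)"
  by (cases "y \<le> 1") (auto simp: max_def)

theorem mainTheorem8:
  "\<exists>C::real. C > 0 \<and>
     (\<forall>(V::nat set) E r D. simple_graph V E \<and> r \<ge> 1 \<and> ratio_output V E r D \<longrightarrow>
        r_dominating V E r D \<and>
        avg_cong V E r D \<le> C * max 1 (sqrt (real (max_degree V E) ^ r)) * mac V E r)"
proof (intro exI[of _ 4] conjI allI impI)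
  fix V :: "nat set" and E r D
  assume a: "simple_graph V E \<and> r \<ge> 1 \<and> ratio_output V E r D"
  then have G: "simple_graph V E" and R: "(ratio_step V E r)\<^sup>*\<^sup>* {} D" and cov: "nbhd_set V E r D = V"
    unfolding ratio_output_def by auto
  have domV: "r_dominating V E r V"
    unfolding r_dominating_def nbhd_set_def using nbhd_self[of _ V E r] nbhd_sub[of V E r] by blast
  have DV: "D \<subseteq> V" using inv[OF G domV R] by auto
  show rdD: "r_dominating V E r D" unfolding r_dominating_def using DV cov by auto
  define K where "K = 2 * max 1 (max_degree V E ^ r)"
  have Kb: "\<forall>x\<in>V. card (nbhd V E r x) \<le> K" unfolding K_def using nbhd_card_bound[OF G] by auto
  have main: "avg_cong V E r D \<le> 2 * sqrt (real K) * avg_cong V E r S" if S: "r_dominating V E r S" for S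
  proof -
    have SV: "S \<subseteq> V" using S unfolding r_dominating_def by auto
    have "cost V E r D \<le> pot V E r S {}" using inv[OF G S R] pot_nonneg[of V E r S D] by linarith
    also have "\<dots> \<le> 2 * sqrt (real K) * cost V E r S" by (rule pot_empty_bound[OF G S Kb])
    finally have "cost V E r D / real (card V) \<le> 2 * sqrt (real K) * cost V E r S / real (card V)"
      by (rule divide_right_mono) simp
    then show ?thesis unfolding avg_cost[OF G SV] avg_cost[OF G DV] by simp
  qed
  define M where "M = {avg_cong V E r S | S. r_dominating V E r S}"
  have fV: "finite V" using G unfolding simple_graph_def by auto
  have "M \<subseteq> avg_cong V E r ` Pow V" unfolding M_def r_dominating_def by auto
  then have fM: "finite M" using fV by (meson finite_Pow_iff finite_imageI finite_subset)
  have "M \<noteq> {}" unfolding M_def using domV by auto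
  then have "Min M \<in> M" using fM by (rule Min_in[rotated])
  then obtain S0 where S0: "r_dominating V E r S0" "mac V E r = avg_cong V E r S0"
    unfolding M_def mac_def by auto
  have "sqrt (real K) = sqrt 2 * sqrt (max 1 (real (max_degree V E) ^ r))"
    unfolding K_def by (simp add: real_sqrt_mult of_nat_max)
  also have "\<dots> \<le> 2 * max 1 (sqrt (real (max_degree V E) ^ r))"
  proof (rule mult_mono)
    have "sqrt 2 \<le> sqrt ((2::real)^2)" by (intro real_sqrt_le_mono) simp
    then show "sqrt 2 \<le> (2::real)" by (simp only: real_sqrt_abs)
  qed (auto simp: sqrt_max1)
  finally have Kle: "2 * sqrt (real K) \<le> 4 * max 1 (sqrt (real (max_degree V E) ^ r))" by simp
  have "avg_cong V E r D \<le> 2 * sqrt (real K) * mac V E r" using main[OF S0(1)] S0(2) by simp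
  also have "\<dots> \<le> 4 * max 1 (sqrt (real (max_degree V E) ^ r)) * mac V E r"
    using Kle avg_nonneg[of V E r S0] S0(2) by (intro mult_right_mono) auto
  finally show "avg_cong V E r D \<le> 4 * max 1 (sqrt (real (max_degree V E) ^ r)) * mac V E r" .
qed simp


end
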